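(* Let $G$ be a finite, simple, undirected, connected graph. Then $O_{R,k}(G)$, viewed as a function of the positive integer $k$ with values in $\{\mathcal{B}=-1,\ \mathcal{N}=0,\ \mathcal{M}=1\}$, is non-decreasing in $k$.
   Context: For vertices $x,y$ of $G$, $d(x,y)$ is the shortest-path distance and $d_k(x,y)=\min\{d(x,y),k+1\}$ for a positive integer $k$. A set $S\subseteq V(G)$ is a distance-$k$ resolving set if for all distinct $x,y\in V(G)$ there exists $z\in S$ with $d_k(x,z)\neq d_k(y,z)$. The Maker-Breaker distance-$k$ resolving game (MB$k$RG) on $G$ is played by two players, Maker and Breaker, who alternately select a vertex of $G$ not yet chosen (no passing). Maker wins if the vertices he selects (at some point) form a distance-$k$ resolving set of $G$; Breaker wins if she prevents this. The $M$-game is the game in which Maker moves first, the $B$-game the one in which Breaker moves first. $O_{R,k}(G)=\mathcal{M}$ if Maker has a winning strategy in both the $M$-game and the $B$-game; $O_{R,k}(G)=\mathcal{B}$ if Breaker has a winning strategy in both; $O_{R,k}(G)=\mathcal{N}$ if the first player has a winning strategy (in both the $M$-game and the $B$-game). The outcomes are ordered $\mathcal{B}<\mathcal{N}<\mathcal{M}$, identified with $-1,0,1$. *)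

theory Defs
  imports Main
begin

definition simple_graph :: "'a set \<Rightarrow> ('a \<Rightarrow> 'a \<Rightarrow> bool) \<Rightarrow> bool" where
  "simple_graph V E \<longleftrightarrow> finite V \<and> (\<forall>x y. E x y \<longrightarrow> x \<in> V \<and> y \<in> V)
     \<and> (\<forall>x y. E x y \<longrightarrow> E y x) \<and> (\<forall>x. \<not> E x x)"

text \<open>A walk from x to y: a list of vertices, consecutive ones adjacent; length = number of edges.\<close>

definition is_walk :: "'a set \<Rightarrow> ('a \<Rightarrow> 'a \<Rightarrow> bool) \<Rightarrow> 'a list \<Rightarrow> 'a \<Rightarrow> 'a \<Rightarrow> bool" where
  "is_walk V E xs x y \<longleftrightarrow> xs \<noteq> [] \<and> hd xs = x \<and> last xs = y \<and> set xs \<subseteq> V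
     \<and> (\<forall>i. Suc i < length xs \<longrightarrow> E (xs ! i) (xs ! Suc i))"

definition connected_graph :: "'a set \<Rightarrow> ('a \<Rightarrow> 'a \<Rightarrow> bool) \<Rightarrow> bool" where
  "connected_graph V E \<longleftrightarrow> (\<forall>x\<in>V. \<forall>y\<in>V. \<exists>xs. is_walk V E xs x y)"

definition gdist :: "'a set \<Rightarrow> ('a \<Rightarrow> 'a \<Rightarrow> bool) \<Rightarrow> 'a \<Rightarrow> 'a \<Rightarrow> nat" where
  "gdist V E x y = (LEAST n. \<exists>xs. is_walk V E xs x y \<and> length xs = Suc n)"

definition gdist_k :: "'a set \<Rightarrow> ('a \<Rightarrow> 'a \<Rightarrow> bool) \<Rightarrow> nat \<Rightarrow> 'a \<Rightarrow> 'a \<Rightarrow> nat" where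
  "gdist_k V E k x y = min (gdist V E x y) (k + 1)"

definition dist_k_resolving :: "'a set \<Rightarrow> ('a \<Rightarrow> 'a \<Rightarrow> bool) \<Rightarrow> nat \<Rightarrow> 'a set \<Rightarrow> bool" where
  "dist_k_resolving V E k S \<longleftrightarrow> S \<subseteq> V \<and>
     (\<forall>x\<in>V. \<forall>y\<in>V. x \<noteq> y \<longrightarrow> (\<exists>z\<in>S. gdist_k V E k x z \<noteq> gdist_k V E k y z))"

text \<open>A position is (M, B, t): M = Maker's vertices, B = Breaker's vertices,
  t = True iff it is Maker's turn.  maker_wins: Maker has a winning strategy from the
  position (Maker wins as soon as R holds of his set); breaker_wins: Breaker has a
  winning strategy (R never holds of Maker's set up to the end of the game).\<close>

inductive maker_wins :: "'a set \<Rightarrow> ('a set \<Rightarrow> bool) \<Rightarrow> 'a set \<Rightarrow> 'a set \<Rightarrow> bool \<Rightarrow> bool"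
  for V R where
  mw_done: "R M \<Longrightarrow> maker_wins V R M B t"
| mw_maker: "v \<in> V - M - B \<Longrightarrow> maker_wins V R (insert v M) B False \<Longrightarrow> maker_wins V R M B True"
| mw_breaker: "V - M - B \<noteq> {} \<Longrightarrow> (\<forall>v\<in>V - M - B. maker_wins V R M (insert v B) True)
     \<Longrightarrow> maker_wins V R M B False"

inductive breaker_wins :: "'a set \<Rightarrow> ('a set \<Rightarrow> bool) \<Rightarrow> 'a set \<Rightarrow> 'a set \<Rightarrow> bool \<Rightarrow> bool"
  for V R where
  bw_end: "\<not> R M \<Longrightarrow> V - M - B = {} \<Longrightarrow> breaker_wins V R M B t"
| bw_breaker: "\<not> R M \<Longrightarrow> v \<in> V - M - B \<Longrightarrow> breaker_wins V R M (insert v B) True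
     \<Longrightarrow> breaker_wins V R M B False"
| bw_maker: "\<not> R M \<Longrightarrow> V - M - B \<noteq> {} \<Longrightarrow> (\<forall>v\<in>V - M - B. breaker_wins V R (insert v M) B False)
     \<Longrightarrow> breaker_wins V R M B True"

text \<open>M-game: Maker moves first (start position with Maker to move); B-game: Breaker first.\<close>

definition maker_wins_M_game :: "'a set \<Rightarrow> ('a \<Rightarrow> 'a \<Rightarrow> bool) \<Rightarrow> nat \<Rightarrow> bool" where
  "maker_wins_M_game V E k = maker_wins V (dist_k_resolving V E k) {} {} True"

definition maker_wins_B_game :: "'a set \<Rightarrow> ('a \<Rightarrow> 'a \<Rightarrow> bool) \<Rightarrow> nat \<Rightarrow> bool" where
  "maker_wins_B_game V E k = maker_wins V (dist_k_resolving V E k) {} {} False"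

definition breaker_wins_M_game :: "'a set \<Rightarrow> ('a \<Rightarrow> 'a \<Rightarrow> bool) \<Rightarrow> nat \<Rightarrow> bool" where
  "breaker_wins_M_game V E k = breaker_wins V (dist_k_resolving V E k) {} {} True"

definition breaker_wins_B_game :: "'a set \<Rightarrow> ('a \<Rightarrow> 'a \<Rightarrow> bool) \<Rightarrow> nat \<Rightarrow> bool" where
  "breaker_wins_B_game V E k = breaker_wins V (dist_k_resolving V E k) {} {} False"

text \<open>Outcome O_{R,k}(G) encoded as M = 1, N = 0, B = -1.  The final branch is
  unreachable for Maker-Breaker games (standard fact) and is left unspecified.\<close>

definition outcome_Rk :: "'a set \<Rightarrow> ('a \<Rightarrow> 'a \<Rightarrow> bool) \<Rightarrow> nat \<Rightarrow> int" where
  "outcome_Rk V E k =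
    (if maker_wins_M_game V E k \<and> maker_wins_B_game V E k then 1
     else if breaker_wins_M_game V E k \<and> breaker_wins_B_game V E k then -1
     else if maker_wins_M_game V E k \<and> breaker_wins_B_game V E k then 0
     else undefined)"

end

theory Submission
  imports Defs
begin

lemma mw_R_mono:
  assumes "maker_wins V R M B t" and "\<And>S. R S \<Longrightarrow> R' S"
  shows "maker_wins V R' M B t"
  using assms(1)
proof (induction rule: maker_wins.induct)
  case (mw_done M B t) then show ?case by (simp add: assms(2) maker_wins.mw_done)
next
  case (mw_maker v M B) then show ?case by (meson maker_wins.mw_maker)
next
  case (mw_breaker M B) then show ?case by (simp add: maker_wins.mw_breaker)
qed

lemma mw_L:
  assumes "maker_wins V R M B t" and "M \<subseteq> V"
    and mono: "\<And>S S'. R S \<Longrightarrow> S \<subseteq> S' \<Longrightarrow> S' \<subseteq> V \<Longrightarrow> R S'"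
  shows "R (M \<union> (V - B))"
  using assms(1,2)
proof (induction rule: maker_wins.induct)
  case (mw_done M B t) then show ?case using mono[of M "M \<union> (V - B)"] by auto
next
  case (mw_maker v M B)
  then have "insert v M \<union> (V - B) = M \<union> (V - B)" by auto
  with mw_maker show ?case by auto
next
  case (mw_breaker M B)
  then obtain v where v: "v \<in> V - M - B" by auto
  with mw_breaker have "R (M \<union> (V - insert v B))" by auto
  then show ?case using mono[of "M \<union> (V - insert v B)" "M \<union> (V - B)"] mw_breaker.prems by auto
qed

lemma mw_pos:
  assumes "maker_wins V R M B t"
    and mono: "\<And>S S'. R S \<Longrightarrow> S \<subseteq> S' \<Longrightarrow> S' \<subseteq> V \<Longrightarrow> R S'"
  shows "M \<subseteq> M' \<Longrightarrow> B' \<subseteq> B \<Longrightarrow> M' \<inter> B' = {} \<Longrightarrow> M' \<union> B' \<subseteq> V \<Longrightarrow> maker_wins V R M' B' t"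
  using assms(1)
proof (induction arbitrary: M' B' rule: maker_wins.induct)
  case (mw_done M B t)
  have "R M'" using mono[of M M'] mw_done by blast
  then show ?case by (rule maker_wins.mw_done)
next
  case (mw_maker v M B)
  show ?case
  proof (cases "v \<in> M'")
    case False
    have vB: "v \<notin> B'" using mw_maker.hyps(1) mw_maker.prems(2) by blast
    have vV: "v \<in> V - M' - B'" using mw_maker.hyps(1) False vB by blast
    have "maker_wins V R (insert v M') B' False"
    proof (rule mw_maker.IH)
      show "insert v M \<subseteq> insert v M'" using mw_maker.prems(1) by blast
      show "B' \<subseteq> B" by (rule mw_maker.prems(2))
      show "insert v M' \<inter> B' = {}" using mw_maker.prems(3) vB by blast
      show "insert v M' \<union> B' \<subseteq> V" using mw_maker.prems(4) vV by blast
    qed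
    then show ?thesis using vV by (rule maker_wins.mw_maker[rotated])
  next
    case True
    show ?thesis
    proof (cases "V - M' - B' = {}")
      case False
      then obtain w where w: "w \<in> V - M' - B'" by blast
      have "maker_wins V R (insert w M') B' False"
      proof (rule mw_maker.IH)
        show "insert v M \<subseteq> insert w M'" using mw_maker.prems(1) True by blast
        show "B' \<subseteq> B" by (rule mw_maker.prems(2))
        show "insert w M' \<inter> B' = {}" using mw_maker.prems(3) w by blast
        show "insert w M' \<union> B' \<subseteq> V" using mw_maker.prems(4) w by blast
      qed
      then show ?thesis using w by (rule maker_wins.mw_maker[rotated])
    next
      case emp: True
      have sub: "insert v M \<subseteq> V" using mw_maker.prems(1,4) True by blast
      have "R (insert v M \<union> (V - B))"
        by (rule mw_L[OF mw_maker.hyps(2) sub mono])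
      moreover have "insert v M \<union> (V - B) \<subseteq> M'"
        using emp True mw_maker.prems(1,2) by blast
      moreover have "M' \<subseteq> V" using mw_maker.prems(4) by blast
      ultimately have "R M'" using mono by blast
      then show ?thesis by (rule maker_wins.mw_done)
    qed
  qed
next
  case (mw_breaker M B)
  show ?case
  proof (cases "V - M' - B' = {}")
    case emp: True
    have mw: "maker_wins V R M B False"
    proof (rule maker_wins.mw_breaker)
      show "V - M - B \<noteq> {}" by (rule mw_breaker.hyps(1))
      show "\<forall>v\<in>V - M - B. maker_wins V R M (insert v B) True" using mw_breaker.IH by blast
    qed
    have sub: "M \<subseteq> V" using mw_breaker.prems(1,4) by blast
    have "R (M \<union> (V - B))" by (rule mw_L[OF mw sub mono])
    moreover have "M \<union> (V - B) \<subseteq> M'" using emp mw_breaker.prems(1,2) by blast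
    moreover have "M' \<subseteq> V" using mw_breaker.prems(4) by blast
    ultimately have "R M'" using mono by blast
    then show ?thesis by (rule maker_wins.mw_done)
  next
    case False
    obtain v0 where v0: "v0 \<in> V - M - B" using mw_breaker.hyps(1) by blast
    have "maker_wins V R M' (insert w B') True" if w: "w \<in> V - M' - B'" for w
    proof (cases "w \<in> B")
      case False
      have wf: "w \<in> V - M - B" using w False mw_breaker.prems(1) by blast
      have IH: "\<And>M'' B''. M \<subseteq> M'' \<Longrightarrow> B'' \<subseteq> insert w B \<Longrightarrow> M'' \<inter> B'' = {} \<Longrightarrow>
          M'' \<union> B'' \<subseteq> V \<Longrightarrow> maker_wins V R M'' B'' True"
        using mw_breaker.IH wf by blast
      show ?thesis
        by (rule IH) (use w mw_breaker.prems in blast)+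
    next
      case True
      have IH: "\<And>M'' B''. M \<subseteq> M'' \<Longrightarrow> B'' \<subseteq> insert v0 B \<Longrightarrow> M'' \<inter> B'' = {} \<Longrightarrow>
          M'' \<union> B'' \<subseteq> V \<Longrightarrow> maker_wins V R M'' B'' True"
        using mw_breaker.IH v0 by blast
      show ?thesis
        by (rule IH) (use w True mw_breaker.prems in blast)+
    qed
    then have "\<forall>w\<in>V - M' - B'. maker_wins V R M' (insert w B') True" by blast
    with False show ?thesis by (rule maker_wins.mw_breaker)
  qed
qed

lemma determ:
  assumes "finite V"
  shows "maker_wins V R M B t \<or> breaker_wins V R M B t"
proof (induction "card (V - M - B)" arbitrary: M B t rule: less_induct)
  case less
  show ?case
  proof (cases "R M")
    case True then show ?thesis by (simp add: maker_wins.mw_done)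
  next
    case nR: False
    show ?thesis
    proof (cases "V - M - B = {}")
      case True with nR show ?thesis by (simp add: breaker_wins.bw_end)
    next
      case ne: False
      have lt1: "card (V - insert v M - B) < card (V - M - B)" if "v \<in> V - M - B" for v
        using that assms by (intro psubset_card_mono) auto
      have lt2: "card (V - M - insert v B) < card (V - M - B)" if "v \<in> V - M - B" for v
        using that assms by (intro psubset_card_mono) auto
      show ?thesis
      proof (cases t)
        case True
        show ?thesis
        proof (cases "\<exists>v\<in>V - M - B. maker_wins V R (insert v M) B False")
          case True
          then obtain v where "v \<in> V - M - B" "maker_wins V R (insert v M) B False" by blast
          then have "maker_wins V R M B True" by (rule maker_wins.mw_maker)
          then show ?thesis using \<open>t\<close> by simp
        next
          case False
          then have "\<forall>v\<in>V - M - B. breaker_wins V R (insert v M) B False"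
            using less lt1 by blast
          then show ?thesis using \<open>t\<close> nR ne by (simp add: breaker_wins.bw_maker)
        qed
      next
        case False
        show ?thesis
        proof (cases "\<forall>v\<in>V - M - B. maker_wins V R M (insert v B) True")
          case True then show ?thesis using \<open>\<not>t\<close> ne by (simp add: maker_wins.mw_breaker)
        next
          case False
          then obtain v where "v \<in> V - M - B" "\<not> maker_wins V R M (insert v B) True" by blast
          then have "breaker_wins V R M (insert v B) True" using less lt2 by blast
          then show ?thesis using \<open>\<not>t\<close> nR \<open>v \<in> V - M - B\<close>
            by (metis (full_types) breaker_wins.bw_breaker)
        qed
      qed
    qed
  qed
qed

lemma excl:
  assumes "maker_wins V R M B t"
  shows "\<not> breaker_wins V R M B t"
  using assms
proof (induction rule: maker_wins.induct)
  case (mw_done M B t)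
  show ?case
  proof
    assume "breaker_wins V R M B t"
    then show False
    proof cases
      case bw_end then show ?thesis using mw_done by simp
    next
      case (bw_breaker v) then show ?thesis using mw_done by simp
    next
      case bw_maker then show ?thesis using mw_done by simp
    qed
  qed
next
  case (mw_maker v M B)
  show ?case
  proof
    assume "breaker_wins V R M B True"
    then show False
    proof cases
      case bw_end then show ?thesis using mw_maker by blast
    next
      case bw_maker then show ?thesis using mw_maker by blast
    next
      case (bw_breaker v) then show ?thesis by simp
    qed
  qed
next
  case (mw_breaker M B)
  show ?case
  proof
    assume "breaker_wins V R M B False"
    then show False
    proof cases
      case bw_end then show ?thesis using mw_breaker by blast
    next
      case (bw_breaker v) then show ?thesis using mw_breaker by blast
    next
      case bw_maker then show ?thesis by simp
    qed
  qed
qed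

lemma res_mono_set:
  "dist_k_resolving V E k S \<Longrightarrow> S \<subseteq> S' \<Longrightarrow> S' \<subseteq> V \<Longrightarrow> dist_k_resolving V E k S'"
  unfolding dist_k_resolving_def by blast

lemma min_neq_mono:
  fixes a b k1 k2 :: nat
  assumes "min a (k1 + 1) \<noteq> min b (k1 + 1)" "k1 \<le> k2"
  shows "min a (k2 + 1) \<noteq> min b (k2 + 1)"
  using assms by (simp add: min_def split: if_splits)

lemma res_mono_k:
  assumes "dist_k_resolving V E k1 S" "k1 \<le> k2"
  shows "dist_k_resolving V E k2 S"
  using assms min_neq_mono unfolding dist_k_resolving_def gdist_k_def
  by blast

lemma extra_move:
  assumes "maker_wins V (dist_k_resolving V E k) {} {} False"
  shows "maker_wins V (dist_k_resolving V E k) {} {} True"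
proof (cases "V = {}")
  case True
  with assms have "dist_k_resolving V E k {}" by (auto elim: maker_wins.cases)
  then show ?thesis by (rule maker_wins.mw_done)
next
  case False
  then obtain w where w: "w \<in> V" by auto
  have "maker_wins V (dist_k_resolving V E k) {w} {} False"
    using mw_pos[OF assms res_mono_set] w by auto
  then show ?thesis using w by (intro maker_wins.mw_maker[of w]) auto
qed

lemma outcome_eq:
  assumes "finite V"
  shows "outcome_Rk V E k = (if maker_wins_B_game V E k then 1
     else if maker_wins_M_game V E k then 0 else -1)"
proof -
  let ?R = "dist_k_resolving V E k"
  have d1: "maker_wins V ?R {} {} True \<or> breaker_wins V ?R {} {} True" by (rule determ[OF assms])
  have d2: "maker_wins V ?R {} {} False \<or> breaker_wins V ?R {} {} False" by (rule determ[OF assms])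
  have e1: "maker_wins V ?R {} {} True \<Longrightarrow> \<not> breaker_wins V ?R {} {} True" by (rule excl)
  have e2: "maker_wins V ?R {} {} False \<Longrightarrow> \<not> breaker_wins V ?R {} {} False" by (rule excl)
  have x: "maker_wins V ?R {} {} False \<Longrightarrow> maker_wins V ?R {} {} True" by (rule extra_move)
  show ?thesis
    unfolding outcome_Rk_def maker_wins_M_game_def maker_wins_B_game_def
      breaker_wins_M_game_def breaker_wins_B_game_def
    using d1 d2 e1 e2 x by auto
qed

theorem proposition2p4:
  fixes V :: "'a set" and E :: "'a \<Rightarrow> 'a \<Rightarrow> bool" and k1 k2 :: nat
  assumes "simple_graph V E" and "connected_graph V E"
    and "1 \<le> k1" and "k1 \<le> k2"
  shows "outcome_Rk V E k1 \<le> outcome_Rk V E k2"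
proof -
  have fin: "finite V" using assms(1) unfolding simple_graph_def by auto
  have mB: "maker_wins_B_game V E k1 \<Longrightarrow> maker_wins_B_game V E k2"
    unfolding maker_wins_B_game_def using res_mono_k[OF _ assms(4)] mw_R_mono by blast
  have mM: "maker_wins_M_game V E k1 \<Longrightarrow> maker_wins_M_game V E k2"
    unfolding maker_wins_M_game_def using res_mono_k[OF _ assms(4)] mw_R_mono by blast
  show ?thesis unfolding outcome_eq[OF fin] using mB mM by auto
qed

end
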